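(* Let $\varphi \in \mathcal{L}$. If there is a quasi-notional graded doxastic model (QNGDM) $M$ and a world $w$ of $M$ with $(M,w) \models \varphi$, then there exists a finite QNGDM $M'$ and a world $w'$ of $M'$ with $(M',w') \models \varphi$.
   Context: Fix a countably infinite set of atoms $\mathit{Atm}$ and a finite set of agents $\mathit{Agt}=\{1,\dots,n\}$; a group is a non-empty subset $J\subseteq \mathit{Agt}$, and $2^{\mathit{Agt}*}$ denotes the set of groups. $\mathbb{N}_0$ (resp. $\mathbb{N}_1$) are the naturals with (resp. without) $0$, and $\mathbb{N}_0^{\omega}=\mathbb{N}_0\cup\{\omega\}$, $\mathbb{N}_1^{\omega}=\mathbb{N}_1\cup\{\omega\}$ with $\omega$ an infinite element. A multiset over a set $X$ is a function $f:X\to\mathbb{N}_0^{\omega}$; its support is $\{x: f(x)>0\}$. A possibly infinite sum of grades equals the sum of its non-zero summands if there are finitely many of them and none is $\omega$, and equals $\omega$ otherwise. For $k\in\mathbb{N}_0$ and a group $J$, a partition of $k$ over $J$ is a function $\delta:J\to\mathbb{N}_0$ with $\sum_{i\in J}\delta(i)=k$; the set of these is $P(J,k)$. The language $\mathcal{L}_0$ is given by $\alpha ::= p \mid \neg\alpha \mid \alpha\wedge\alpha \mid \triangle_i^{k}\alpha$ with $p\in\mathit{Atm}$, $i\in\mathit{Agt}$, $k\in\mathbb{N}_1^{\omega}$ ("agent $i$ explicitly believes $\alpha$ with degree at least $k$"). The language $\mathcal{L}$ is given by $\varphi ::= \alpha \mid \neg\varphi\mid\varphi\wedge\varphi\mid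 \Box_J^{k}\varphi$ with $\alpha\in\mathcal{L}_0$, $J$ a group, $k\in\mathbb{N}_0$. A QNGDM is a tuple $M=(W,\mathcal{D},\rho,\mathcal{V})$ with $W$ a set of worlds, $\mathcal{D}:\mathit{Agt}\times W\to$ (multisets over $\mathcal{L}_0$), $\rho: 2^{\mathit{Agt}*}\times W\times W\to\mathbb{N}_0^{\omega}$, $\mathcal{V}:\mathit{Atm}\to 2^W$, with satisfaction: $(M,w)\models p$ iff $w\in\mathcal{V}(p)$; Boolean clauses as usual; $(M,w)\models\triangle_i^k\alpha$ iff $\mathcal{D}(i,w)(\alpha)\ge k$; $(M,w)\models\Box_J^k\varphi$ iff for all $u\in W$ with $\rho(J,w,u)\le k$, $(M,u)\models\varphi$; and such that for every group $J$ and $w,u\in W$ with $\rho(J,w,u)\neq\omega$: (i) $\rho(J,w,u)\ge \sum_{\alpha\in\mathcal{L}_0,\,(M,u)\not\models\alpha}\sum_{i\in J}\mathcal{D}(i,w)(\alpha)$; and (ii) there exists $\delta\in P(J,\rho(J,w,u))$ such that for every non-empty $J'\subset J$, $\sum_{i\in J'}\delta(i)\ge\rho(J',w,u)$. A QNGDM is finite if $W$ is finite and the support of $\mathcal{D}(i,w)$ is finite for every $i,w$. *)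

theory Defs
  imports Main "HOL-Library.Extended_Nat"
begin

typedef enat1 = "{k :: enat. 1 \<le> k}"
  by (rule exI[of _ 1]) simp

text \<open>Atoms are natural numbers (a countably infinite set); agents are the elements
  of a finite type 'agt; a group is a non-empty set of agents.\<close>
datatype 'agt fml0 =
    Atom nat
  | Neg0 "'agt fml0"
  | And0 "'agt fml0" "'agt fml0"
  | Tri 'agt enat1 "'agt fml0"

datatype 'agt fml =
    Base "'agt fml0"
  | Neg "'agt fml"
  | And "'agt fml" "'agt fml"
  | Box "'agt set" nat "'agt fml"

fun wf_fml :: "'agt fml \<Rightarrow> bool" where
  "wf_fml (Base a) = True"
| "wf_fml (Neg f) = wf_fml f"
| "wf_fml (And f g) = (wf_fml f \<and> wf_fml g)"
| "wf_fml (Box J k f) = (J \<noteq> {} \<and> wf_fml f)"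

text \<open>A model structure (W, D, rho, V); multisets over L0 are functions into enat.\<close>
record ('agt, 'w) model =
  W :: "'w set"
  D :: "'agt \<Rightarrow> 'w \<Rightarrow> 'agt fml0 \<Rightarrow> enat"
  rho :: "'agt set \<Rightarrow> 'w \<Rightarrow> 'w \<Rightarrow> enat"
  V :: "nat \<Rightarrow> 'w set"

fun sat0 :: "('agt, 'w) model \<Rightarrow> 'w \<Rightarrow> 'agt fml0 \<Rightarrow> bool" where
  "sat0 M w (Atom p) = (w \<in> V M p)"
| "sat0 M w (Neg0 a) = (\<not> sat0 M w a)"
| "sat0 M w (And0 a b) = (sat0 M w a \<and> sat0 M w b)"
| "sat0 M w (Tri i k a) = (D M i w a \<ge> Rep_enat1 k)"

fun sat :: "('agt, 'w) model \<Rightarrow> 'w \<Rightarrow> 'agt fml \<Rightarrow> bool" where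
  "sat M w (Base a) = sat0 M w a"
| "sat M w (Neg f) = (\<not> sat M w f)"
| "sat M w (And f g) = (sat M w f \<and> sat M w g)"
| "sat M w (Box J k f) = (\<forall>u \<in> W M. rho M J w u \<le> enat k \<longrightarrow> sat M u f)"

definition gsum :: "('x \<Rightarrow> enat) \<Rightarrow> 'x set \<Rightarrow> enat" where
  "gsum f A = (if finite {x \<in> A. f x \<noteq> 0} \<and> (\<forall>x \<in> A. f x \<noteq> \<infinity>)
               then sum f {x \<in> A. f x \<noteq> 0} else \<infinity>)"

definition partitions :: "'agt set \<Rightarrow> nat \<Rightarrow> ('agt \<Rightarrow> nat) set" where
  "partitions J k = {\<delta>. (\<Sum>i\<in>J. \<delta> i) = k}"

definition is_QNGDM :: "('agt, 'w) model \<Rightarrow> bool" where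
  "is_QNGDM M \<longleftrightarrow>
     (\<forall>p. V M p \<subseteq> W M) \<and>
     (\<forall>J w u. J \<noteq> {} \<and> w \<in> W M \<and> u \<in> W M \<and> rho M J w u \<noteq> \<infinity> \<longrightarrow>
        rho M J w u \<ge> gsum (\<lambda>a. \<Sum>i\<in>J. D M i w a) {a. \<not> sat0 M u a} \<and>
        (\<exists>\<delta> \<in> partitions J (the_enat (rho M J w u)).
           \<forall>J'. J' \<noteq> {} \<and> J' \<subset> J \<longrightarrow> enat (\<Sum>i\<in>J'. \<delta> i) \<ge> rho M J' w u))"

definition finite_QNGDM :: "('agt, 'w) model \<Rightarrow> bool" where
  "finite_QNGDM M \<longleftrightarrow> finite (W M) \<and> (\<forall>i. \<forall>w \<in> W M. finite {a. D M i w a > 0})"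

end

theory Submission
  imports Defs "HOL-Library.Countable"
begin

fun sub0 :: "'agt fml0 \<Rightarrow> 'agt fml0 set" where
  "sub0 (Atom p) = {Atom p}"
| "sub0 (Neg0 a) = insert (Neg0 a) (sub0 a)"
| "sub0 (And0 a b) = insert (And0 a b) (sub0 a \<union> sub0 b)"
| "sub0 (Tri i k a) = insert (Tri i k a) (sub0 a)"

fun fsub0 :: "'agt fml \<Rightarrow> 'agt fml0 set" where
  "fsub0 (Base a) = sub0 a"
| "fsub0 (Neg f) = fsub0 f"
| "fsub0 (And f g) = fsub0 f \<union> fsub0 g"
| "fsub0 (Box J k f) = fsub0 f"

fun fsub :: "'agt fml \<Rightarrow> 'agt fml set" where
  "fsub (Base a) = {Base a}"
| "fsub (Neg f) = insert (Neg f) (fsub f)"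
| "fsub (And f g) = insert (And f g) (fsub f \<union> fsub g)"
| "fsub (Box J k f) = insert (Box J k f) (fsub f)"

lemma sub0_self: "a \<in> sub0 a" by (cases a) auto
lemma finite_sub0: "finite (sub0 a)" by (induct a) auto
lemma finite_fsub0: "finite (fsub0 f)" by (induct f) (auto simp: finite_sub0)
lemma finite_fsub: "finite (fsub f)" by (induct f) auto
lemma fsub_self: "f \<in> fsub f" by (cases f) auto
lemma fsub_trans: "g \<in> fsub f \<Longrightarrow> fsub g \<subseteq> fsub f" by (induct f) auto
lemma fsub_base: "Base a \<in> fsub f \<Longrightarrow> sub0 a \<subseteq> fsub0 f" by (induct f) auto
lemma sub0_trans: "b \<in> sub0 a \<Longrightarrow> sub0 b \<subseteq> sub0 a" by (induct a) auto
lemma fsub0_closed: "b \<in> fsub0 f \<Longrightarrow> sub0 b \<subseteq> fsub0 f"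
  by (induct f) (auto dest: sub0_trans)

lemma sat0_transfer:
  assumes "\<And>i a. a \<in> S \<Longrightarrow> D M' i n a = D M i u a"
      and "\<And>p. n \<in> V M' p \<longleftrightarrow> u \<in> V M p"
  shows "sub0 a \<subseteq> S \<Longrightarrow> sat0 M' n a = sat0 M u a"
proof (induct a)
  case (Tri i k a)
  then have "a \<in> S" "Tri i k a \<in> S" using sub0_self by auto
  then show ?case using assms(1) by simp
qed (use assms in auto)

lemma gsum_mono:
  assumes "\<And>a. a \<in> A' \<Longrightarrow> f' a \<noteq> 0 \<Longrightarrow> a \<in> A \<and> f' a \<le> f a"
  shows "gsum f' A' \<le> gsum f A"
proof (cases "finite {x \<in> A. f x \<noteq> 0} \<and> (\<forall>x \<in> A. f x \<noteq> \<infinity>)")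
  case False
  then have "gsum f A = \<infinity>" unfolding gsum_def by (rule if_not_P)
  then show ?thesis by simp
next
  case True
  let ?B = "{x \<in> A. f x \<noteq> 0}" and ?B' = "{x \<in> A'. f' x \<noteq> 0}"
  have sub: "?B' \<subseteq> ?B"
  proof
    fix x assume "x \<in> ?B'"
    then have "x \<in> A" "f' x \<le> f x" "f' x \<noteq> 0" using assms by auto
    then show "x \<in> ?B" using zero_le[of "f' x"] by (metis (mono_tags, lifting) mem_Collect_eq le_zero_eq)
  qed
  have fin: "finite ?B'" using True sub finite_subset by blast
  have ninf: "\<forall>x\<in>A'. f' x \<noteq> \<infinity>"
  proof
    fix x assume "x \<in> A'"
    show "f' x \<noteq> \<infinity>"
    proof (cases "f' x = 0")
      case False
      then have "x \<in> A" "f' x \<le> f x" using assms \<open>x \<in> A'\<close> by auto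
      moreover have "f x \<noteq> \<infinity>" using True \<open>x \<in> A\<close> by blast
      ultimately show ?thesis using enat_ord_simps(5) by metis
    qed simp
  qed
  have "sum f' ?B' \<le> sum f ?B'" by (rule sum_mono) (use assms in auto)
  also have "\<dots> \<le> sum f ?B" by (rule sum_mono2) (use True sub in auto)
  finally have le: "sum f' ?B' \<le> sum f ?B" .
  have "gsum f' A' = sum f' ?B'" unfolding gsum_def using fin ninf by (rule if_P[OF conjI])
  moreover have "gsum f A = sum f ?B" unfolding gsum_def using True by (rule if_P)
  ultimately show ?thesis using le by simp
qed

definition wit :: "('agt, 'w) model \<Rightarrow> 'w \<Rightarrow> 'agt fml \<Rightarrow> 'w" where
  "wit M u \<psi> = (case \<psi> of Box J k g \<Rightarrow> (SOME v. v \<in> W M \<and> rho M J u v \<le> enat k \<and> \<not> sat M v g) | _ \<Rightarrow> u)"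

fun lab :: "('agt, 'w) model \<Rightarrow> 'w \<Rightarrow> 'agt fml list \<Rightarrow> nat list \<Rightarrow> 'w" where
  "lab M w subs [] = w"
| "lab M w subs (i # p) = (if i < length subs \<and> \<not> sat M (lab M w subs p) (subs ! i)
      then wit M (lab M w subs p) (subs ! i) else lab M w subs p)"

lemma wit_Box:
  assumes "u \<in> W M" "\<not> sat M u (Box J k g)"
  shows "wit M u (Box J k g) \<in> W M \<and> rho M J u (wit M u (Box J k g)) \<le> enat k
         \<and> \<not> sat M (wit M u (Box J k g)) g"
proof -
  have "\<exists>v. v \<in> W M \<and> rho M J u v \<le> enat k \<and> \<not> sat M v g" using assms by auto
  then show ?thesis unfolding wit_def by (simp, rule someI_ex)
qed

lemma lab_in_W: "w \<in> W M \<Longrightarrow> lab M w subs p \<in> W M"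
proof (induct p)
  case (Cons i p)
  show ?case
  proof (cases "i < length subs \<and> \<not> sat M (lab M w subs p) (subs ! i)")
    case True
    show ?thesis
    proof (cases "subs ! i")
      case (Box J k g)
      then show ?thesis using True Cons wit_Box[of "lab M w subs p" M J k g] by auto
    qed (use True Cons in \<open>auto simp: wit_def\<close>)
  qed (use Cons in auto)
qed simp

theorem lemma1:
  fixes \<phi> :: "('agt::finite) fml" and M :: "('agt, 'w) model" and w :: 'w
  assumes "wf_fml \<phi>" and "is_QNGDM M" and "w \<in> W M" and "sat M w \<phi>"
  shows "\<exists>M' :: ('agt, nat) model. is_QNGDM M' \<and> finite_QNGDM M' \<and>
           (\<exists>w' \<in> W M'. sat M' w' \<phi>)"
proof -
  obtain subs where subs: "set subs = fsub \<phi>" using finite_list[OF finite_fsub[of \<phi>]] by blast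
  define K where "K = length subs"
  define N where "N = size \<phi>"
  define P where "P = {xs. set xs \<subseteq> {..<K} \<and> length xs \<le> N}"
  define S0 where "S0 = fsub0 \<phi>"
  define L where "L = lab M w subs"
  define M' :: "('agt, nat) model" where "M' = \<lparr>W = to_nat ` P,
     D = \<lambda>i n a. if a \<in> S0 then D M i (L (from_nat n)) a else 0,
     rho = \<lambda>J m n. if (from_nat n :: nat list) \<noteq> [] \<and> tl (from_nat n) = (from_nat m :: nat list)
        then rho M J (L (from_nat m)) (L (from_nat n)) else \<infinity>,
     V = \<lambda>p. {n \<in> to_nat ` P. L (from_nat n) \<in> V M p}\<rparr>"
  have LW: "L p \<in> W M" for p unfolding L_def by (rule lab_in_W[OF assms(3)])
  have s0: "sat0 M' (to_nat p) a = sat0 M (L p) a" if "p \<in> P" "sub0 a \<subseteq> S0" for p a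
  proof (rule sat0_transfer[OF _ _ that(2)])
    fix i a assume "a \<in> S0"
    then show "D M' i (to_nat p) a = D M i (L p) a" by (simp add: M'_def)
  next
    fix q show "to_nat p \<in> V M' q \<longleftrightarrow> L p \<in> V M q" using that(1) by (simp add: M'_def)
  qed
  have truth: "\<And>p. f \<in> fsub \<phi> \<Longrightarrow> p \<in> P \<Longrightarrow> length p + size f \<le> N \<Longrightarrow>
      sat M' (to_nat p) f = sat M (L p) f" for f
  proof (induct f)
    case (Base a)
    have "sub0 a \<subseteq> S0" using fsub_base[OF Base.prems(1)] S0_def by simp
    then show ?case using s0[OF Base.prems(2)] by simp
  next
    case (Neg f)
    have "f \<in> fsub \<phi>" using fsub_trans[OF Neg.prems(1)] fsub_self by auto
    then show ?case using Neg.hyps[OF _ Neg.prems(2)] Neg.prems(3) by simp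
  next
    case (And f g)
    have "f \<in> fsub \<phi>" "g \<in> fsub \<phi>" using fsub_trans[OF And.prems(1)] fsub_self by auto
    then show ?case using And.hyps(1)[OF _ And.prems(2)] And.hyps(2)[OF _ And.prems(2)] And.prems(3) by simp
  next
    case (Box J k g)
    have gs: "g \<in> fsub \<phi>" using fsub_trans[OF Box.prems(1)] fsub_self by auto
    show ?case
    proof
      assume H: "sat M' (to_nat p) (Box J k g)"
      show "sat M (L p) (Box J k g)"
      proof (rule ccontr)
        assume nb: "\<not> sat M (L p) (Box J k g)"
        obtain i where i: "i < K" "subs ! i = Box J k g"
          using Box.prems(1) subs K_def by (metis in_set_conv_nth)
        let ?q = "i # p"
        have qP: "?q \<in> P" using Box.prems i by (auto simp: P_def)
        have Lq: "L ?q = wit M (L p) (Box J k g)" using i nb K_def by (simp add: L_def)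
        note wb = wit_Box[OF LW nb]
        have "rho M' J (to_nat p) (to_nat ?q) \<le> enat k" using wb Lq by (simp add: M'_def)
        then have "sat M' (to_nat ?q) g" using H qP by (auto simp: M'_def)
        moreover have "sat M' (to_nat ?q) g = sat M (L ?q) g"
          using Box.hyps[OF gs qP] Box.prems by simp
        ultimately show False using wb Lq by simp
      qed
    next
      assume H: "sat M (L p) (Box J k g)"
      show "sat M' (to_nat p) (Box J k g)"
      proof (simp, intro ballI impI)
        fix n assume nW: "n \<in> W M'" and r: "rho M' J (to_nat p) n \<le> enat k"
        obtain q where q: "q \<in> P" "n = to_nat q" using nW by (auto simp: M'_def)
        have e: "q \<noteq> [] \<and> tl q = p" using r q by (auto simp: M'_def split: if_splits)
        then have len: "length q = Suc (length p)" by (cases q) auto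
        have "rho M J (L p) (L q) \<le> enat k" using r q e by (auto simp: M'_def)
        then have "sat M (L q) g" using H LW by auto
        then show "sat M' n g" using Box.hyps[OF gs q(1)] Box.prems len q(2) by simp
      qed
    qed
  qed
  have finP: "finite P" unfolding P_def using finite_lists_length_le[of "{..<K}" N] by simp
  have "is_QNGDM M'"
    unfolding is_QNGDM_def
  proof (intro conjI allI impI)
    fix p show "V M' p \<subseteq> W M'" by (auto simp: M'_def)
  next
    fix J m n
    assume A: "J \<noteq> {} \<and> m \<in> W M' \<and> n \<in> W M' \<and> rho M' J m n \<noteq> \<infinity>"
    obtain pm pn where pm: "pm \<in> P" "m = to_nat pm" and pn: "pn \<in> P" "n = to_nat pn"
      using A by (auto simp: M'_def)
    have e: "pn \<noteq> [] \<and> tl pn = pm" using A pm pn by (auto simp: M'_def split: if_splits)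
    have rr: "rho M' J' m n = rho M J' (L pm) (L pn)" for J'
      using e pm pn by (simp add: M'_def)
    have Q: "rho M J (L pm) (L pn) \<noteq> \<infinity>" using A rr by simp
    note MQ = assms(2)[unfolded is_QNGDM_def, THEN conjunct2, rule_format,
        of J "L pm" "L pn", OF conjI[OF conjunct1[OF A] conjI[OF LW conjI[OF LW Q]]]]
    have "gsum (\<lambda>a. \<Sum>i\<in>J. D M' i m a) {a. \<not> sat0 M' n a}
        \<le> gsum (\<lambda>a. \<Sum>i\<in>J. D M i (L pm) a) {a. \<not> sat0 M (L pn) a}"
    proof (rule gsum_mono)
      fix a assume a1: "a \<in> {a. \<not> sat0 M' n a}" and a2: "(\<Sum>i\<in>J. D M' i m a) \<noteq> 0"
      have aS: "a \<in> S0"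
      proof (rule ccontr)
        assume "a \<notin> S0" then have "(\<Sum>i\<in>J. D M' i m a) = 0" by (simp add: M'_def)
        then show False using a2 by simp
      qed
      have "sub0 a \<subseteq> S0" using fsub0_closed[of a \<phi>] aS S0_def by simp
      then have "sat0 M' n a = sat0 M (L pn) a"
        using s0[OF pn(1)] pn(2) by simp
      moreover have "(\<Sum>i\<in>J. D M' i m a) = (\<Sum>i\<in>J. D M i (L pm) a)"
        using aS pm by (simp add: M'_def)
      ultimately show "a \<in> {a. \<not> sat0 M (L pn) a} \<and>
          (\<Sum>i\<in>J. D M' i m a) \<le> (\<Sum>i\<in>J. D M i (L pm) a)" using a1 by simp
    qed
    then show "gsum (\<lambda>a. \<Sum>i\<in>J. D M' i m a) {a. \<not> sat0 M' n a} \<le> rho M' J m n"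
      using order_trans[OF _ conjunct1[OF MQ]] rr by simp
    show "\<exists>\<delta>\<in>partitions J (the_enat (rho M' J m n)).
       \<forall>J'. J' \<noteq> {} \<and> J' \<subset> J \<longrightarrow> rho M' J' m n \<le> enat (sum \<delta> J')"
      using MQ rr by simp
  qed
  moreover have "finite_QNGDM M'"
    unfolding finite_QNGDM_def
  proof (intro conjI allI ballI)
    show "finite (W M')" using finP by (simp add: M'_def)
  next
    fix i n
    have "{a. D M' i n a > 0} \<subseteq> S0" by (auto simp: M'_def split: if_splits)
    then show "finite {a. D M' i n a > 0}" by (rule finite_subset) (simp add: S0_def finite_fsub0)
  qed
  moreover have "to_nat ([]::nat list) \<in> W M'" by (simp add: M'_def P_def)
  moreover have "sat M' (to_nat ([]::nat list)) \<phi>"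
  proof -
    have "[] \<in> P" by (simp add: P_def)
    then have "sat M' (to_nat ([]::nat list)) \<phi> = sat M (L []) \<phi>"
      using truth[OF fsub_self[of \<phi>]] by (simp add: N_def)
    then show ?thesis using assms(4) by (simp add: L_def)
  qed
  ultimately show ?thesis by blast
qed

end
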